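(* Let $k\ge2$, $n$ be integers, $c\ge0$, and let numbers $b_{\ell,r}$, for $k<\ell\le n+1$ and $r\in\{0,\dots,k\}$, satisfy $b_{n+1,r}=0$, $b_{\ell,0}=0$, and for $k<\ell\le n$, $r\ge1$: $$b_{\ell,r}=\sum_{j=\ell}^{n}\left(\frac{\ell-k}{j-k}\right)^k\left(\frac{k-1}{j+1}\,b_{j+1,r-1}+\frac{c}{n}\right).$$ Then for all $\ell$ with $k^2+k\le\ell\le n$ and all $r\in\{0,\dots,k\}$, $$b_{\ell,r}\ \ge\ \left(\frac{r(\ell-k)}{(k-1)n}-\frac{1}{k-1}\left(\frac{\ell-k}{n-k}\right)^k\sum_{r'=0}^{r-1}\sum_{i=0}^{r'}\frac{(k-1)^i}{i!}\ln^i\!\left(\frac{n}{\ell}\right)-\frac{3k^2r}{(k-1)n}\right)c.$$ *)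

theory Defs
  imports Complex_Main
begin

end

theory Submission
  imports Defs
begin


definition Ep :: "nat \<Rightarrow> real \<Rightarrow> real" where "Ep p y = (\<Sum>i=0..p. y^i / fact i)"

lemma pow_diff_ge:
  fixes A B :: real assumes "0 \<le> B" "B \<le> A"
  shows "real (Suc i) * B^i * (A - B) \<le> A^(Suc i) - B^(Suc i)"
proof (induction i)
  case 0 then show ?case by simp
next
  case (Suc i)
  have "A^(Suc (Suc i)) - B^(Suc (Suc i)) = A*(A^(Suc i) - B^(Suc i)) + B^(Suc i)*(A-B)"
    by (simp add: algebra_simps)
  also have "\<dots> \<ge> A*(real (Suc i) * B^i * (A - B)) + B^(Suc i)*(A-B)"
    using Suc assms by (intro add_right_mono mult_left_mono) auto
  moreover have "A*(real (Suc i) * B^i * (A - B)) \<ge> B*(real (Suc i) * B^i * (A - B))"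
    using assms by (intro mult_right_mono) auto
  ultimately show ?case by (simp add: algebra_simps)
qed

lemma Ep_nonneg: "0 \<le> y \<Longrightarrow> 0 \<le> Ep p y"
  unfolding Ep_def by (intro sum_nonneg) auto

lemma Ep_zero: "Ep p 0 = 1"
  unfolding Ep_def by (induction p) auto

lemma Ep_le_exp: assumes "0 \<le> y" shows "Ep p y \<le> exp y"
proof -
  have "Ep p y = (\<Sum>n\<le>p. y ^ n / fact n)" unfolding Ep_def by (simp add: atLeast0AtMost)
  also have "\<dots> \<le> exp y"
    using assms summable_exp_generic[of y]
    by (auto simp: exp_def divide_inverse ac_simps intro!: sum_le_suminf)
  finally show ?thesis .
qed

lemma Ep_Suc: "Ep (Suc p) y = 1 + (\<Sum>i=0..p. y^(Suc i) / fact (Suc i))"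
  unfolding Ep_def by (subst sum.atLeast0_atMost_Suc_shift) simp

lemma Ep_incr:
  assumes "0 \<le> B" "B \<le> A"
  shows "Ep p B * (A - B) \<le> Ep (Suc p) A - Ep (Suc p) B"
proof -
  have "Ep (Suc p) A - Ep (Suc p) B = (\<Sum>i=0..p. (A^(Suc i) - B^(Suc i)) / fact (Suc i))"
    unfolding Ep_Suc by (simp only: sum_subtractf diff_divide_distrib)
  moreover have "Ep p B * (A - B) = (\<Sum>i=0..p. B^i * (A - B) / fact i)"
    unfolding Ep_def by (simp add: sum_distrib_right)
  moreover have "B^i * (A - B) / fact i \<le> (A^(Suc i) - B^(Suc i)) / fact (Suc i)" for i
  proof -
    have "B^i * (A - B) / fact i = real (Suc i) * (B^i * (A - B)) / (real (Suc i) * fact i)"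
      by (simp only: mult_divide_mult_cancel_left_if) simp
    also have "\<dots> = real (Suc i) * B^i * (A - B) / fact (Suc i)"
      by (simp add: fact_Suc mult.assoc)
    also have "\<dots> \<le> (A^(Suc i) - B^(Suc i)) / fact (Suc i)"
      using pow_diff_ge[OF assms, of i] by (intro divide_right_mono) auto
    finally show ?thesis .
  qed
  ultimately show ?thesis by (simp add: sum_mono)
qed

definition Sr :: "real \<Rightarrow> nat \<Rightarrow> real \<Rightarrow> real" where
  "Sr K r L = (\<Sum>r'<r. Ep r' ((K-1)*L))"

lemma Sr_eq: "Sr K r L = (\<Sum>r'<r. \<Sum>i = 0..r'. (K - 1) ^ i / fact i * L ^ i)"
  unfolding Sr_def Ep_def by (simp add: power_mult_distrib)

lemma Sr_zero: "Sr K r 0 = real r"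
  unfolding Sr_def by (simp add: Ep_zero)

lemma Sr_nonneg: "1 \<le> K \<Longrightarrow> 0 \<le> L \<Longrightarrow> 0 \<le> Sr K r L"
  unfolding Sr_def by (intro sum_nonneg Ep_nonneg) auto

lemma Sr_le: assumes "1 \<le> K" "0 \<le> L" shows "Sr K r L \<le> real r * exp ((K-1)*L)"
proof -
  have "Sr K r L \<le> (\<Sum>r'<r. exp ((K-1)*L))"
    unfolding Sr_def using assms by (intro sum_mono Ep_le_exp) auto
  then show ?thesis by simp
qed

lemma Sr_incr:
  assumes "1 \<le> K" "0 \<le> b" "b \<le> a"
  shows "(K-1)*(a-b)*Sr K r b \<le> Sr K (Suc r) a - Sr K (Suc r) b"
proof -
  have A: "Sr K (Suc r) y = 1 + (\<Sum>r'<r. Ep (Suc r') ((K-1)*y))" for y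
    unfolding Sr_def by (subst sum.lessThan_Suc_shift) (simp add: Ep_zero[unfolded Ep_def] Ep_def)
  have "Sr K (Suc r) a - Sr K (Suc r) b = (\<Sum>r'<r. Ep (Suc r') ((K-1)*a) - Ep (Suc r') ((K-1)*b))"
    unfolding A by (simp add: sum_subtractf)
  moreover have "(K-1)*(a-b)*Sr K r b = (\<Sum>r'<r. Ep r' ((K-1)*b) * ((K-1)*a - (K-1)*b))"
    unfolding Sr_def by (simp add: sum_distrib_left sum_distrib_right algebra_simps)
  moreover have "Ep r' ((K-1)*b) * ((K-1)*a - (K-1)*b) \<le> Ep (Suc r') ((K-1)*a) - Ep (Suc r') ((K-1)*b)" for r'
    using assms by (intro Ep_incr) (auto intro: mult_left_mono)
  ultimately show ?thesis by (simp add: sum_mono)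
qed

lemma sum_tele_ge:
  fixes f g :: "nat \<Rightarrow> real"
  assumes "\<And>j. a \<le> j \<Longrightarrow> j \<le> b \<Longrightarrow> g j - g (Suc j) \<le> f j" "a \<le> Suc b"
  shows "g a - g (Suc b) \<le> (\<Sum>j=a..b. f j)"
  using assms
proof (induction b)
  case 0 then show ?case by (cases a) auto
next
  case (Suc b)
  show ?case
  proof (cases "a = Suc (Suc b)")
    case True then show ?thesis by simp
  next
    case False
    then have "a \<le> Suc b" using Suc.prems by simp
    then have "g a - g (Suc b) \<le> (\<Sum>j=a..b. f j)" using Suc by auto
    moreover have "g (Suc b) - g (Suc (Suc b)) \<le> f (Suc b)" using Suc.prems \<open>a \<le> Suc b\<close> by auto
    ultimately show ?thesis using \<open>a \<le> Suc b\<close> by (simp add: sum.nat_ivl_Suc')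
  qed
qed

lemma sum_tele_le:
  fixes f g :: "nat \<Rightarrow> real"
  assumes "\<And>j. a \<le> j \<Longrightarrow> j \<le> b \<Longrightarrow> f j \<le> g j - g (Suc j)" "a \<le> Suc b"
  shows "(\<Sum>j=a..b. f j) \<le> g a - g (Suc b)"
proof -
  have "(\<lambda>j. - g j) a - (\<lambda>j. - g j) (Suc b) \<le> (\<Sum>j=a..b. - f j)"
  proof (rule sum_tele_ge)
    fix j assume "a \<le> j" "j \<le> b"
    then show "- g j - - g (Suc j) \<le> - f j" using assms(1)[of j] by linarith
  qed (use assms in auto)
  then show ?thesis by (simp add: sum_negf)
qed

lemma tele_eq:
  fixes g :: "nat \<Rightarrow> real"
  assumes "a \<le> Suc b"
  shows "(\<Sum>j=a..b. g j - g (Suc j)) = g a - g (Suc b)"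
  using sum_tele_ge[of a b g "\<lambda>j. g j - g (Suc j)"] sum_tele_le[of a b "\<lambda>j. g j - g (Suc j)" g] assms
  by auto

lemma A1: fixes x :: real assumes "0 < x"
  shows "1/x^p - 1/(x+1)^p \<le> real p / x^(Suc p)"
proof -
  have "1 + real p * (-1/(x+1)) \<le> (1 + (-1/(x+1)))^p"
    using assms by (intro Bernoulli_inequality) (simp add: field_simps)
  also have "1 + (-1/(x+1)) = x/(x+1)" using assms by (simp add: field_simps)
  finally have B: "1 - real p/(x+1) \<le> (x/(x+1))^p" by simp
  have "1/x^p - 1/(x+1)^p = (1/x^p) * (1 - (x/(x+1))^p)"
    using assms by (simp add: power_divide field_simps)
  also have "\<dots> \<le> (1/x^p) * (real p/(x+1))"
    using B assms by (intro mult_left_mono) auto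
  also have "\<dots> \<le> (1/x^p) * (real p/x)"
    using assms by (intro mult_left_mono divide_left_mono) auto
  also have "\<dots> = real p / x^(Suc p)" by simp
  finally show ?thesis .
qed

lemma A2: fixes x :: real assumes "0 < x"
  shows "real p / (x+1)^(Suc p) \<le> 1/x^p - 1/(x+1)^p"
proof -
  have "1 + real p * (1/x) \<le> (1 + 1/x)^p"
    using assms by (intro Bernoulli_inequality) (simp add: field_simps)
  also have "1 + 1/x = (x+1)/x" using assms by (simp add: field_simps)
  finally have B: "1 + real p/x \<le> ((x+1)/x)^p" by simp
  have "real p / (x+1)^(Suc p) = (1/(x+1)^p) * (real p/(x+1))" by simp
  also have "\<dots> \<le> (1/(x+1)^p) * (real p/x)"
    using assms by (intro mult_left_mono divide_left_mono) auto
  also have "\<dots> \<le> (1/(x+1)^p) * (((x+1)/x)^p - 1)"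
    using B assms by (intro mult_left_mono) auto
  also have "\<dots> = 1/x^p - 1/(x+1)^p"
    using assms by (simp add: power_divide field_simps add_pos_pos)
  finally show ?thesis .
qed

lemma A3: fixes x K :: real assumes "0 < x" "K = real k" "K < x + 1"
  shows "((x+1)/x)^k \<le> 1 + K/(x+1-K)"
proof -
  have "1 + real k * (-1/(x+1)) \<le> (1 + (-1/(x+1)))^k"
    using assms by (intro Bernoulli_inequality) (simp add: field_simps)
  also have "1 + (-1/(x+1)) = x/(x+1)" using assms by (simp add: field_simps)
  finally have B: "(x+1-K)/(x+1) \<le> (x/(x+1))^k" using assms by (simp add: field_simps)
  have pos: "0 < (x+1-K)/(x+1)" using assms by simp
  have "((x+1)/x)^k = 1 / (x/(x+1))^k" by (simp add: power_divide)
  also have "\<dots> \<le> 1 / ((x+1-K)/(x+1))"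
    using B pos by (intro divide_left_mono mult_pos_pos) auto
  also have "\<dots> = 1 + K/(x+1-K)" using assms by (simp add: field_simps)
  finally show ?thesis .
qed

lemma S1:
  fixes k l n :: nat
  assumes k2: "2 \<le> k" and kl: "real k < real l" and ln: "l \<le> n"
  shows "((real l - real k) - (real l - real k)^k/(real n - real k)^(k-1))/(real k - 1)
          \<le> (\<Sum>j=l..n. ((real l - real k)/(real j - real k))^k)"
proof -
  define K where "K = real k"
  define m where "m = real l - K"
  define N where "N = real n - K"
  have m0: "0 < m" using kl by (simp add: m_def K_def)
  have mN: "m \<le> N" using ln by (simp add: m_def N_def)
  have K1: "1 < K" using k2 by (simp add: K_def)
  define g where "g j = (1/(K-1)) / (real j - K)^(k-1)" for j
  have step: "g j - g (Suc j) \<le> 1/(real j - K)^k" if "l \<le> j" "j \<le> n" for j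
  proof -
    have x0: "0 < real j - K" using that kl by (simp add: K_def)
    have "1/(real j - K)^(k-1) - 1/((real j - K)+1)^(k-1) \<le> real (k-1) / (real j - K)^(Suc (k-1))"
      by (rule A1[OF x0])
    moreover have "real (k-1) = K - 1" "Suc (k-1) = k" using k2 by (auto simp: K_def)
    ultimately have "1/(real j - K)^(k-1) - 1/((real j - K)+1)^(k-1) \<le> (K-1) / (real j - K)^k" by simp
    then have "(1/(K-1)) * (1/(real j - K)^(k-1) - 1/((real j - K)+1)^(k-1)) \<le> (1/(K-1)) * ((K-1) / (real j - K)^k)"
      using K1 by (intro mult_left_mono) auto
    moreover have "g j - g (Suc j) = (1/(K-1)) * (1/(real j - K)^(k-1) - 1/((real j - K)+1)^(k-1))"
      unfolding g_def by (simp add: right_diff_distrib algebra_simps)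
    moreover have "(1/(K-1)) * ((K-1) / (real j - K)^k) = 1/(real j - K)^k" using K1 by simp
    ultimately show ?thesis using K1 by simp
  qed
  have "g l - g (Suc n) \<le> (\<Sum>j=l..n. 1/(real j - K)^k)"
    using ln by (intro sum_tele_ge step) auto
  then have "m^k * (g l - g (Suc n)) \<le> m^k * (\<Sum>j=l..n. 1/(real j - K)^k)"
    using m0 by (intro mult_left_mono) auto
  also have "\<dots> = (\<Sum>j=l..n. ((real l - real k)/(real j - real k))^k)"
    by (simp add: sum_distrib_left power_divide m_def K_def)
  finally have *: "m^k * (g l - g (Suc n)) \<le> (\<Sum>j=l..n. ((real l - real k)/(real j - real k))^k)" .
  have gl: "m^k * g l = m/(K-1)"
  proof -
    have "m^k = m * m^(k-1)" using k2 by (metis One_nat_def Suc_le_eq le_add_diff_inverse2 less_2_cases_iff not_less plus_1_eq_Suc power_add power_one_right  less_le_trans zero_less_two Suc_pred power_Suc)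
    then have "m^k * g l = (m * m^(k-1)) / (m^(k-1) * (K-1))" unfolding g_def m_def[symmetric] by simp
    also have "\<dots> = m/(K-1)" using m0 by simp
    finally show ?thesis .
  qed
  have gn: "m^k * g (Suc n) \<le> m^k * ((1/(K-1)) * (1/N^(k-1)))"
  proof -
    have "N^(k-1) \<le> (real (Suc n) - K)^(k-1)" using mN m0 by (intro power_mono) (auto simp: N_def)
    moreover have "0 < N" using mN m0 by simp
    moreover have "0 < real (Suc n) - K" using mN m0 by (simp add: N_def)
    ultimately have "1/(real (Suc n) - K)^(k-1) \<le> 1/N^(k-1)" by (intro divide_left_mono mult_pos_pos) auto
    then have "(1/(K-1)) * (1/(real (Suc n) - K)^(k-1)) \<le> (1/(K-1)) * (1/N^(k-1))" using K1 by (intro mult_left_mono) auto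
    then have "g (Suc n) \<le> (1/(K-1)) * (1/N^(k-1))" unfolding g_def by simp
    then show ?thesis using m0 by (intro mult_left_mono) auto
  qed
  have "(m - m^k/N^(k-1))/(K-1) \<le> m^k * (g l - g (Suc n))"
  proof -
    have "(m - m^k/N^(k-1))/(K-1) = m/(K-1) - m^k * ((1/(K-1)) * (1/N^(k-1)))"
      by (simp add: diff_divide_distrib)
    also have "\<dots> \<le> m^k * (g l - g (Suc n))" using gl gn by (simp add: right_diff_distrib)
    finally show ?thesis .
  qed
  with * show ?thesis by (simp add: m_def N_def K_def)
qed

lemma S2:
  fixes k l n :: nat
  assumes k2: "2 \<le> k" and kl: "real k < real l" and ln: "l \<le> n"
  shows "(\<Sum>j=l..n-1. (real l - real k)^k/(real j - real k)^(Suc k))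
          \<le> 1/(real l - real k) + 1/real k"
proof -
  define K where "K = real k"
  define m where "m = real l - K"
  have m0: "0 < m" using kl by (simp add: m_def K_def)
  have K1: "1 < K" using k2 by (simp add: K_def)
  define g where "g j = 1/(K * (real j - K)^k) + 1/(real j - K)^(Suc k)" for j
  have step: "1/(real j - K)^(Suc k) \<le> g j - g (Suc j)" if "l \<le> j" for j
  proof -
    define x where "x = real j - K"
    have x0: "0 < x" using that kl by (simp add: K_def x_def)
    have "K / (x+1)^(Suc k) \<le> 1/x^k - 1/(x+1)^k" using A2[OF x0, of k] by (simp add: K_def)
    then have "(1/K) * (K / (x+1)^(Suc k)) \<le> (1/K) * (1/x^k - 1/(x+1)^k)" using K1 by (intro mult_left_mono) auto
    moreover have "(1/K) * (K / (x+1)^(Suc k)) = 1 / (x+1)^(Suc k)" using K1 by simp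
    moreover have "(1/K) * (1/x^k - 1/(x+1)^k) = 1/(K*x^k) - 1/(K*(x+1)^k)" by (simp add: right_diff_distrib)
    ultimately have "1 / (x+1)^(Suc k) \<le> 1/(K*x^k) - 1/(K*(x+1)^k)" by (simp only:)
    moreover have "real (Suc j) - K = x+1" by (simp add: x_def)
    then have "g (Suc j) = 1/(K*(x+1)^k) + 1/(x+1)^(Suc k)" by (simp only: g_def)
    moreover have "g j = 1/(K*x^k) + 1/x^(Suc k)" by (simp only: g_def x_def)
    moreover have "1/(x+1)^(Suc k) \<le> 1/x^(Suc k)" using x0 by (intro divide_left_mono power_mono mult_pos_pos) auto
    ultimately show ?thesis by (simp add: x_def)
  qed
  have n1: "l \<le> Suc (n-1)" using ln by simp
  have "(\<Sum>j=l..n-1. 1/(real j - K)^(Suc k)) \<le> g l - g (Suc (n-1))"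
    using n1 by (intro sum_tele_le step) auto
  also have "\<dots> \<le> g l"
  proof -
    have "0 < real (Suc (n-1)) - K" using ln kl K_def by linarith
    then have "0 \<le> g (Suc (n-1))" unfolding g_def using K1 by auto
    then show ?thesis by simp
  qed
  finally have "m^k * (\<Sum>j=l..n-1. 1/(real j - K)^(Suc k)) \<le> m^k * g l"
    using m0 by (intro mult_left_mono) auto
  also have "m^k * g l = 1/K + 1/m" unfolding g_def m_def[symmetric] using m0 K1 by (simp add: field_simps)
  finally show ?thesis by (simp add: sum_distrib_left m_def K_def)
qed

definition F :: "nat \<Rightarrow> nat \<Rightarrow> nat \<Rightarrow> nat \<Rightarrow> real" where
  "F k n r l = real r * (real l - real k) / ((real k - 1) * real n)
        - 1 / (real k - 1) * ((real l - real k) / (real n - real k)) ^ k * Sr (real k) r (ln (real n / real l))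
        - 3 * (real k)\<^sup>2 * real r / ((real k - 1) * real n)"

lemma b2_lemma:
  fixes m N x y J K q S :: real and k :: nat
  assumes k1: "1 \<le> k" and K: "K = real k" and m0: "0 < m" and N0: "0 < N" and x0: "0 < x"
    and y: "y = x + 1" and J: "J = y + K" and xK: "K*K \<le> x" and q0: "0 \<le> q"
    and S0: "0 \<le> S" and S: "S \<le> q * (N/y)^(k-1)"
  shows "(m/N)^k * (K/(y-K)) * S / J \<le> q*K/N * (m^k/x^(Suc k))"
proof -
  have K1: "1 \<le> K" using k1 K by simp
  have yK: "0 < y - K" using xK K1 y by (smt (verit) mult_left_mono mult_le_cancel_left1)
  have J0: "0 < J" using J yK K1 by simp
  have "(m/N)^k * (K/(y-K)) * S / J \<le> (m/N)^k * (K/(y-K)) * (q * (N/y)^(k-1)) / J"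
    using S yK K1 J0 m0 N0 by (intro divide_right_mono mult_left_mono) auto
  also have "\<dots> = q*K*m^k / (N * ((y-K)*J*y^(k-1)))"
  proof -
    obtain p where p: "k = Suc p" using k1 by (cases k) auto
    have y0: "0 < y" using x0 y by simp
    have "N^p > 0" "y^p > 0" using N0 y0 by auto
    then show ?thesis unfolding p using yK J0 N0 y0 by (simp add: power_divide field_simps)
  qed
  also have "\<dots> \<le> q*K*m^k / (N * x^(Suc k))"
  proof -
    have "x*x \<le> (y-K)*J"
    proof -
      have "(y-K)*J = x*x + (2*x + 1 - K*K)" using y J by (simp add: algebra_simps)
      moreover have "K*K \<le> 2*x + 1" using xK x0 by simp
      ultimately show ?thesis by simp
    qed
    moreover have "x^(k-1) \<le> y^(k-1)" using x0 y by (intro power_mono) auto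
    ultimately have "x*x*x^(k-1) \<le> (y-K)*J*y^(k-1)"
      by (rule mult_mono) (use x0 yK J0 in auto)
    moreover have "x*x*x^(k-1) = x^(Suc k)" using k1 by (cases k) auto
    ultimately have "x^(Suc k) \<le> (y-K)*J*y^(k-1)" by metis
    then have "N * x^(Suc k) \<le> N * ((y-K)*J*y^(k-1))" using N0 by simp
    then show ?thesis using x0 N0 m0 q0 K1 yK J0 y by (intro divide_left_mono mult_nonneg_nonneg mult_pos_pos) auto
  qed
  also have "\<dots> = q*K/N * (m^k/x^(Suc k))" by simp
  finally show ?thesis .
qed

lemma eqA_gen:
  fixes K J n A B C :: real
  assumes "K - 1 \<noteq> 0" "J \<noteq> 0" "n \<noteq> 0"
  shows "(K-1)/J * (A/((K-1)*n) - 1/(K-1)*B - C/((K-1)*n)) = A/(J*n) - B/J - C/(J*n)"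
proof -
  have 1: "(K-1)/J * (A/((K-1)*n)) = A/(J*n)" using assms by (simp add: field_simps)
  have 2: "(K-1)/J * (1/(K-1)*B) = B/J" using assms by (simp add: field_simps)
  have 3: "(K-1)/J * (C/((K-1)*n)) = C/(J*n)" using assms by (simp add: field_simps)
  show ?thesis by (simp only: right_diff_distrib 1 2 3)
qed

lemma RHS_gen:
  fixes w q J K Z n :: real
  assumes "J \<noteq> 0" "n \<noteq> 0"
  shows "w * (q*(J-K)/(J*n) - Z/J - 3*K^2*q/(J*n) + 1/n) = (q+1)*w/n - q*(3*K^2+K)*(w/J)/n - w*Z/J"
  using assms by (simp add: field_simps power2_eq_square)

lemma T1:
  fixes k n l j r :: nat
  assumes k2: "2 \<le> k" and lk: "k^2 + k \<le> l" and lj: "l \<le> j" and jn: "j < n" and r1: "1 \<le> r"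
  shows "real r * ((real l - real k)/(real j - real k))^k / real n
   - ((real r - 1)*(3*(real k)^2 + real k)/real n + (real r - 1)*real k/(real n - real k)) * ((real l - real k)^k/(real j - real k)^(Suc k))
   - ((real l - real k)/(real n - real k))^k * (Sr (real k) r (ln (real n / real j)) - Sr (real k) r (ln (real n / (real j + 1))))/(real k - 1)
   \<le> ((real l - real k)/(real j - real k))^k * ((real k - 1)/(real j + 1) * F k n (r-1) (j+1) + 1/real n)"
proof -
  define K where "K = real k"
  define m where "m = real l - K"
  define N where "N = real n - K"
  define x where "x = real j - K"
  define y where "y = x + 1"
  define J where "J = real j + 1"
  define q where "q = real r - 1"
  define a where "a = ln (real n / real j)"
  define b where "b = ln (real n / J)"
  define S where "S = Sr K (r-1) b"
  define w where "w = (m/x)^k"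
  have K2: "2 \<le> K" using k2 K_def by simp
  have lK: "K*K + K \<le> real l" using lk unfolding K_def by (simp add: power2_eq_square flip: of_nat_mult of_nat_add)
  have mK: "K*K \<le> m" using lK m_def by simp
  have m0: "0 < m" using mK K2 by (smt (verit) mult_le_cancel_left1)
  have xm: "m \<le> x" using lj m_def x_def by simp
  have x0: "0 < x" using xm m0 by simp
  have xK: "K*K \<le> x" using xm mK by simp
  have JN: "J \<le> real n" using jn J_def by simp
  have yJ: "J = y + K" using y_def x_def J_def by simp
  have Nx: "x < N" using jn x_def N_def by simp
  have N0: "0 < N" using Nx x0 by simp
  have n0: "0 < real n" using N0 N_def K2 by simp
  have J0: "0 < J" using J_def by simp
  have j0: "0 < real j" using x0 x_def K2 by simp
  have q0: "0 \<le> q" using r1 q_def by simp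
  have qr: "real (r-1) = q" using r1 q_def by simp
  have b0: "0 \<le> b" using JN J0 b_def by simp
  have ab: "1/J \<le> a - b"
  proof -
    have "a - b = ln J - ln (real j)" unfolding a_def b_def using n0 J0 j0 by (simp add: ln_divide_pos)
    moreover have "ln (real j / J) \<le> real j / J - 1" using j0 J0 by (intro ln_le_minus_one) simp
    moreover have "ln (real j / J) = ln (real j) - ln J" using j0 J0 by (simp add: ln_divide_pos)
    moreover have "real j / J - 1 = - (1/J)" using J0 J_def by (simp add: field_simps)
    ultimately show ?thesis by simp
  qed
  have S0: "0 \<le> S" unfolding S_def using K2 b0 by (intro Sr_nonneg) auto
  have Fexp: "F k n (r-1) (j+1) = q*y/((K-1)*real n) - 1/(K-1)*(y/N)^k*S - 3*K^2*q/((K-1)*real n)"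
    unfolding F_def S_def b_def y_def x_def J_def N_def K_def qr by (simp add: add.commute diff_add_eq add_diff_eq)
  have eqA: "(K-1)/J * F k n (r-1) (j+1) = q*y/(J*real n) - (y/N)^k*S/J - 3*K^2*q/(J*real n)"
  proof -
    have "K - 1 \<noteq> 0" using K2 by simp
    then show ?thesis unfolding Fexp using J0 n0 eqA_gen[of K J "real n" "q*y" "(y/N)^k*S" "3*K^2*q"] by simp
  qed
  have RHS: "((real l - real k)/(real j - real k))^k * ((real k - 1)/(real j + 1) * F k n (r-1) (j+1) + 1/real n)
     = real r * w/real n - q*(3*K^2+K)*(w/J)/real n - w*(y/N)^k*S/J"
  proof -
    have "((real l - real k)/(real j - real k))^k * ((real k - 1)/(real j + 1) * F k n (r-1) (j+1) + 1/real n)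
       = w * ((K-1)/J * F k n (r-1) (j+1) + 1/real n)" by (simp add: w_def m_def x_def K_def J_def)
    also have "\<dots> = w * (q*y/(J*real n) - (y/N)^k*S/J - 3*K^2*q/(J*real n) + 1/real n)" by (simp only: eqA)
    also have "\<dots> = real r * w/real n - q*(3*K^2+K)*(w/J)/real n - w*(y/N)^k*S/J"
      using J0 n0 RHS_gen[of J "real n" w q K "(y/N)^k*S"] unfolding q_def by (simp add: yJ)
    finally show ?thesis .
  qed
  have pa: "w/J \<le> m^k/x^(Suc k)"
  proof -
    have "w/J = m^k/(x^k*J)" by (simp add: w_def power_divide)
    also have "\<dots> \<le> m^k/(x^k*x)" using x0 m0 J0 yJ y_def K2 by (intro divide_left_mono mult_left_mono mult_pos_pos) auto
    finally show ?thesis by (simp add: mult.commute)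
  qed
  have pb: "w*(y/N)^k = (m/N)^k * (y/x)^k" unfolding w_def using x0 N0 by (simp add: power_divide field_simps)
  have A3': "(y/x)^k \<le> 1 + K/(y-K)" using A3[OF x0 K_def] xK K2 y_def by (smt (verit) mult_le_cancel_left1)
  have b1: "S/J \<le> (Sr K r a - Sr K r b)/(K-1)"
  proof -
    have "(K-1)*(a-b)*S \<le> Sr K (Suc (r-1)) a - Sr K (Suc (r-1)) b"
    proof -
      have "0 < 1/J" using J0 by simp
      then have "b \<le> a" using ab by linarith
      then show ?thesis unfolding S_def using K2 b0 by (intro Sr_incr) auto
    qed
    moreover have "Suc (r-1) = r" using r1 by simp
    moreover have "(K-1)*(S/J) \<le> (K-1)*(a-b)*S"
    proof -
      have "S/J \<le> (a-b)*S" using mult_left_mono[OF ab S0] by (simp add: mult.commute)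
      then have "(K-1)*(S/J) \<le> (K-1)*((a-b)*S)" using K2 by (intro mult_left_mono) auto
      then show ?thesis by (simp add: mult.assoc)
    qed
    ultimately have "(K-1)*(S/J) \<le> Sr K r a - Sr K r b" by simp
    then show ?thesis using K2 by (simp add: field_simps)
  qed
  have Sle: "S \<le> q * (N/y)^(k-1)"
  proof -
    have "S \<le> real (r-1) * exp ((K-1)*b)" unfolding S_def using K2 b0 by (intro Sr_le) auto
    also have "exp ((K-1)*b) = (real n / J)^(k-1)"
    proof -
      have "K - 1 = real (k-1)" using k2 K_def by simp
      then show ?thesis unfolding b_def using n0 J0 by (simp add: exp_of_nat_mult)
    qed
    also have "(real n / J)^(k-1) \<le> (N/y)^(k-1)"
    proof -
      have e: "N*J - real n*y = K*(real n - J)" unfolding N_def using yJ by (simp add: algebra_simps)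
      have "0 \<le> K*(real n - J)" using K2 JN by simp
      then have ny: "real n * y \<le> N*J" using e by simp
      have y0: "0 < y" using y_def x0 by simp
      have "real n / J \<le> N/y" using ny J0 y0 by (simp add: divide_simps mult.commute)
      then show ?thesis using n0 J0 by (intro power_mono) auto
    qed
    finally show ?thesis using qr q0 by (simp add: mult_left_mono)
  qed
  have b2: "(m/N)^k * (K/(y-K)) * S / J \<le> q*K/N * (m^k/x^(Suc k))"
    using b2_lemma[OF _ K_def m0 N0 x0 y_def yJ xK q0 S0 Sle] k2 by simp
  have yK: "0 < y - K" using A3' xK K2 y_def by (smt (verit) mult_le_cancel_left1)
  have pbb: "w*(y/N)^k*S/J \<le> (m/N)^k * ((Sr K r a - Sr K r b)/(K-1)) + q*K/N * (m^k/x^(Suc k))"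
  proof -
    have "w*(y/N)^k*S/J = (m/N)^k * (y/x)^k * (S/J)" by (simp add: pb)
    also have "\<dots> \<le> (m/N)^k * (1 + K/(y-K)) * (S/J)"
      using A3' S0 J0 m0 N0 by (intro mult_right_mono mult_left_mono) auto
    also have "\<dots> = (m/N)^k * (S/J) + (m/N)^k * (K/(y-K)) * S / J" by (simp add: algebra_simps)
    also have "\<dots> \<le> (m/N)^k * ((Sr K r a - Sr K r b)/(K-1)) + q*K/N * (m^k/x^(Suc k))"
      using b1 b2 m0 N0 by (intro add_mono mult_left_mono) auto
    finally show ?thesis .
  qed
  have paa: "q*(3*K^2+K)*(w/J)/real n \<le> q*(3*K^2+K)/real n * (m^k/x^(Suc k))"
  proof -
    have c0: "0 \<le> q*(3*K^2+K)/real n" using q0 K2 n0 by simp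
    have "q*(3*K^2+K)/real n * (w/J) \<le> q*(3*K^2+K)/real n * (m^k/x^(Suc k))"
      by (rule mult_left_mono[OF pa c0])
    then show ?thesis by (simp add: mult.commute)
  qed
  show ?thesis
    unfolding RHS
    using paa pbb unfolding q_def[symmetric] K_def[symmetric] m_def[symmetric] N_def[symmetric] x_def[symmetric] w_def[symmetric] a_def[symmetric] J_def[symmetric] b_def[symmetric]
    by (simp add: algebra_simps)
qed

lemma X0_bound:
  fixes K :: real assumes K2: "2 \<le> K"
  shows "(3*K+1)*(K+1)/K + (K+1)^2/K^2 + 1 \<le> 3*K^3/(K-1)^2"
proof -
  have K0: "0 < K" using K2 by simp
  have p: "((3*K+1)*(K+1)*K + (K+1)^2 + K^2) * (K-1)^2 \<le> 3*K^5"
  proof -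
    have "((3*K+1)*(K+1)*K + (K+1)^2 + K^2) * (K-1)^2 = 3*K^5 - 6*K^3 + K^2 + K + 1"
      by (simp add: algebra_simps power2_eq_square power3_eq_cube power_numeral_reduce)
    moreover have "K^2 + K + 1 \<le> 6*K^3"
    proof -
      have "K^2 \<le> K^3" "K \<le> K^3" "1 \<le> K^3" using K2
        by (auto simp: power2_eq_square power3_eq_cube intro: order_trans[of _ "K*K"] mult_mono)
         (smt (verit) mult_le_cancel_left1 mult_le_cancel_right1)+
      then show ?thesis by simp
    qed
    ultimately show ?thesis by linarith
  qed
  have "(3*K+1)*(K+1)/K + (K+1)^2/K^2 + 1 = ((3*K+1)*(K+1)*K + (K+1)^2 + K^2)/K^2"
    using K0 by (simp add: field_simps power2_eq_square)
  also have "\<dots> = ((3*K+1)*(K+1)*K + (K+1)^2 + K^2) * (K-1)^2 / (K^2 * (K-1)^2)"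
    using K2 by simp
  also have "\<dots> \<le> 3*K^5 / (K^2 * (K-1)^2)"
    using p K2 by (intro divide_right_mono) auto
  also have "\<dots> = 3*K^3/(K-1)^2"
    using K0 by (simp add: power2_eq_square power3_eq_cube power_numeral_reduce)
  
  finally show ?thesis .
qed

lemma Fin_core:
  fixes K R m N n T :: real
  assumes K2: "2 \<le> K" and R1: "1 \<le> R" and RK: "R \<le> K" and mK: "K*K \<le> m" and NK: "K*K \<le> N"
    and nN: "n = N + K" and T0: "0 \<le> T" and T: "T \<le> 1/m + 1/K"
  shows "(R-1)*(((3*K^2+K)/n + K/N)*T + 1/n) \<le> 3*K^2*R/((K-1)*n)"
proof -
  have K0: "0 < K" using K2 by simp
  have KK: "0 < K*K" using K0 by simp
  have N0: "0 < N" using NK KK by simp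
  have n0: "0 < n" using nN N0 K0 by simp
  have h1: "T \<le> (K+1)/K^2"
  proof -
    have "1/m \<le> 1/(K*K)" using mK KK by (intro divide_left_mono) auto
    moreover have "1/(K*K) + 1/K = (K+1)/K^2" using K0 by (simp add: field_simps power2_eq_square)
    ultimately show ?thesis using T by simp
  qed
  have h2: "(3*K^2+K)*T \<le> (3*K+1)*(K+1)/K"
  proof -
    have "(3*K^2+K)*T \<le> (3*K^2+K)*((K+1)/K^2)" using h1 K0 by (intro mult_left_mono) auto
    also have "\<dots> = (3*K+1)*(K+1)/K" using K0 by (simp add: field_simps power2_eq_square)
    finally show ?thesis .
  qed
  have h3: "n*(K/N)*T \<le> (K+1)^2/K^2"
  proof -
    have a: "n/N \<le> (K+1)/K"
    proof -
      have "n*K \<le> (K+1)*N" using nN NK by (simp add: algebra_simps)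
      then show ?thesis using N0 K0 by (simp add: divide_simps mult.commute)
    qed
    have b: "K*T \<le> (K+1)/K"
    proof -
      have "K*T \<le> K*((K+1)/K^2)" using h1 K0 by (intro mult_left_mono) auto
      also have "\<dots> = (K+1)/K" using K0 by (simp add: power2_eq_square)
      finally show ?thesis .
    qed
    have "n*(K/N)*T = (n/N)*(K*T)" by simp
    also have "\<dots> \<le> ((K+1)/K)*((K+1)/K)"
      using a b N0 n0 K0 T0 by (intro mult_mono) auto
    also have "\<dots> = (K+1)^2/K^2" by (simp add: power2_eq_square)
    finally show ?thesis .
  qed
  have hb: "n*(((3*K^2+K)/n + K/N)*T + 1/n) = (3*K^2+K)*T + n*(K/N)*T + 1"
    using n0 by (simp add: field_simps)
  have hc: "n*(((3*K^2+K)/n + K/N)*T + 1/n) \<le> 3*K^3/(K-1)^2"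
    using hb h2 h3 X0_bound[OF K2] by linarith
  have hd: "((3*K^2+K)/n + K/N)*T + 1/n \<le> 3*K^3/((K-1)^2*n)"
  proof -
    have "((3*K^2+K)/n + K/N)*T + 1/n = (n*(((3*K^2+K)/n + K/N)*T + 1/n))/n" using n0 by simp
    also have "\<dots> \<le> (3*K^3/(K-1)^2)/n" using hc n0 by (intro divide_right_mono) auto
    finally show ?thesis by simp
  qed
  have "(R-1)*(((3*K^2+K)/n + K/N)*T + 1/n) \<le> (R-1)*(3*K^3/((K-1)^2*n))"
    using hd R1 by (intro mult_left_mono) auto
  also have "\<dots> \<le> 3*K^2*R/((K-1)*n)"
  proof -
    have "(R-1)*K \<le> R*(K-1)" using RK by (simp add: algebra_simps)
    then have "(R-1)*K*(3*K^2) \<le> R*(K-1)*(3*K^2)" using K0 by (intro mult_right_mono) auto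
    then have ineq: "(R-1)*K*(3*K^2) / ((K-1)^2*n) \<le> R*(K-1)*(3*K^2) / ((K-1)^2*n)"
      using K2 n0 by (intro divide_right_mono) auto
    have k3: "K^3 = K*K^2" by (simp add: power2_eq_square power3_eq_cube)
    have "(R-1)*(3*K^3/((K-1)^2*n)) = (R-1)*K*(3*K^2) / ((K-1)^2*n)"
      unfolding k3 by simp
    also have "\<dots> \<le> R*(K-1)*(3*K^2) / ((K-1)^2*n)" by (rule ineq)
    also have "\<dots> = 3*K^2*R/((K-1)*n)"
      using K2 n0 by (simp add: power2_eq_square)
    finally show ?thesis .
  qed
  finally show ?thesis .
qed

lemma Fin:
  fixes K R m N n P T Sr SumW :: real
  assumes K2: "2 \<le> K" and R1: "1 \<le> R" and RK: "R \<le> K" and mK: "K*K \<le> m" and NK: "K*K \<le> N"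
    and nN: "n = N + K" and T0: "0 \<le> T" and T: "T \<le> 1/m + 1/K" and P0: "0 \<le> P"
    and SW: "(m - P*N)/(K-1) \<le> SumW"
  shows "R*m/((K-1)*n) - 1/(K-1)*P*Sr - 3*K^2*R/((K-1)*n)
     \<le> R/n*SumW - (R-1)/n - (R-1)*((3*K^2+K)/n + K/N)*T - P*(Sr-R)/(K-1)"
proof -
  have K0: "0 < K" using K2 by simp
  have N0: "0 < N" using NK K0 by (smt (verit) mult_pos_pos)
  have n0: "0 < n" using nN N0 K0 by simp
  have a: "R/n*((m - P*N)/(K-1)) \<le> R/n*SumW" using SW R1 n0 by (intro mult_left_mono) auto
  have b: "R/n*((m - P*N)/(K-1)) = R*m/((K-1)*n) - R*P*N/((K-1)*n)"
  proof -
    have "K - 1 \<noteq> 0" "n \<noteq> 0" using K2 n0 by auto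
    have "R/n*((m - P*N)/(K-1)) = (R*(m - P*N))/(n*(K-1))" by (rule times_divide_times_eq)
    also have "\<dots> = (R*m - R*P*N)/((K-1)*n)" by (rule arg_cong2[where f="(/)"]) (simp_all add: algebra_simps)
    finally have "R/n*((m - P*N)/(K-1)) = (R*m - R*P*N)/((K-1)*n)" .
    then show ?thesis by (simp add: diff_divide_distrib)
  qed
  have c: "R*P*N/((K-1)*n) \<le> R*P/(K-1)"
  proof -
    have "R*P*N \<le> R*P*n" using nN K0 R1 P0 by (intro mult_left_mono) auto
    then have "R*P*N/((K-1)*n) \<le> R*P*n/((K-1)*n)" using K2 n0 by (intro divide_right_mono) auto
    also have "\<dots> = R*P/(K-1)" using n0 by simp
    finally show ?thesis .
  qed
  have d: "P*(Sr-R)/(K-1) = 1/(K-1)*P*Sr - R*P/(K-1)" by (simp add: algebra_simps diff_divide_distrib)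
  have e: "(R-1)*(((3*K^2+K)/n + K/N)*T + 1/n) \<le> 3*K^2*R/((K-1)*n)"
    by (rule Fin_core[OF K2 R1 RK mK NK nN T0 T])
  have e2: "(R-1)*(((3*K^2+K)/n + K/N)*T + 1/n) = (R-1)*((3*K^2+K)/n + K/N)*T + (R-1)/n"
    by (simp add: algebra_simps)
  show ?thesis using a b c d e e2 by linarith
qed

lemma Step:
  fixes k n l r :: nat
  assumes k2: "2 \<le> k" and lk: "k^2 + k \<le> l" and ln: "l \<le> n" and r1: "1 \<le> r" and rk: "r \<le> k"
  shows "F k n r l \<le> (\<Sum>j=l..n. ((real l - real k)/(real j - real k))^k *
            ((real k - 1)/(real j + 1) * (if j < n then F k n (r-1) (j+1) else 0) + 1/real n))"
proof -
  define K where "K = real k"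
  define m where "m = real l - K"
  define N where "N = real n - K"
  define R where "R = real r"
  define w where "w j = ((real l - real k)/(real j - real k))^k" for j
  define P where "P = (m/N)^k"
  define f where "f j = ((real l - real k)/(real j - real k))^k *
            ((real k - 1)/(real j + 1) * (if j < n then F k n (r-1) (j+1) else 0) + 1/real n)" for j
  define C where "C = (R - 1)*(3*K^2 + K)/real n + (R - 1)*K/N"
  define Tj where "Tj j = (real l - real k)^k/(real j - real k)^(Suc k)" for j
  define g where "g j = Sr K r (ln (real n / real j))" for j
  have K2: "2 \<le> K" using k2 K_def by simp
  have lK: "K*K + K \<le> real l" using lk unfolding K_def by (simp add: power2_eq_square flip: of_nat_mult of_nat_add)
  have mK: "K*K \<le> m" using lK m_def by simp
  have NK: "K*K \<le> N" using mK ln m_def N_def by simp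
  have m0: "0 < m" using mK K2 by (smt (verit) mult_le_cancel_left1)
  have KK: "0 < K*K" using K2 by simp
  have N0: "0 < N" using NK KK by linarith
  have n1: "1 \<le> n" using ln lk k2 by simp
  have nS: "n = Suc (n-1)" using n1 by simp
  have lS: "l \<le> Suc (n-1)" using ln n1 by simp
  have kl: "real k < real l" using lK K_def K2 by (smt (verit) mult_le_cancel_left1)
  have split: "(\<Sum>j=l..n. f j) = f n + (\<Sum>j=l..n-1. f j)"
    using sum.nat_ivl_Suc'[OF lS, of f] nS by simp
  have splitw: "(\<Sum>j=l..n. w j) = w n + (\<Sum>j=l..n-1. w j)"
    using sum.nat_ivl_Suc'[OF lS, of w] nS by simp
  have wn: "w n = P" unfolding w_def P_def m_def N_def K_def by simp
  have fn: "f n = P / real n" unfolding f_def using wn[unfolded w_def] by simp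
  have hterm: "R * w j / real n - C * Tj j - P * (g j - g (Suc j))/(K - 1) \<le> f j"
    if "l \<le> j" "j \<le> n - 1" for j
  proof -
    have jn: "j < n" using that n1 by simp
    have "g j - g (Suc j) = Sr (real k) r (ln (real n / real j)) - Sr (real k) r (ln (real n / (real j + 1)))"
      unfolding g_def K_def by (simp add: add.commute)
    then show ?thesis
      using T1[OF k2 lk that(1) jn r1] jn unfolding f_def w_def C_def Tj_def P_def R_def m_def N_def K_def
      by simp
  qed
  have sumterm: "(\<Sum>j=l..n-1. R * w j / real n - C * Tj j - P * (g j - g (Suc j))/(K - 1)) \<le> (\<Sum>j=l..n-1. f j)"
    using hterm by (intro sum_mono) auto
  have sumeq: "(\<Sum>j=l..n-1. R * w j / real n - C * Tj j - P * (g j - g (Suc j))/(K - 1))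
     = R/real n * (\<Sum>j=l..n-1. w j) - C * (\<Sum>j=l..n-1. Tj j) - P * (\<Sum>j=l..n-1. g j - g (Suc j))/(K-1)"
  proof -
    have e1: "(\<Sum>j=l..n-1. P * (g j - g (Suc j))/(K - 1)) = P * (\<Sum>j=l..n-1. g j - g (Suc j))/(K-1)"
      by (simp only: sum_divide_distrib sum_distrib_left)
    have e2: "(\<Sum>j=l..n-1. R * w j / real n) = R/real n * (\<Sum>j=l..n-1. w j)"
      by (simp add: sum_distrib_left)
    have e3: "(\<Sum>j=l..n-1. C * Tj j) = C * (\<Sum>j=l..n-1. Tj j)"
      by (simp add: sum_distrib_left)
    show ?thesis by (simp only: sum_subtractf e1 e2 e3)
  qed
  have tele: "(\<Sum>j=l..n-1. g j - g (Suc j)) = Sr K r (ln (real n / real l)) - R"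
    using tele_eq[OF lS, of g] nS unfolding g_def R_def by (simp add: Sr_zero)
  have S1': "(m - P*N)/(K-1) \<le> (\<Sum>j=l..n. w j)"
  proof -
    have "m^k/N^(k-1) = P*N"
    proof -
      obtain p where p: "k = Suc p" using k2 by (cases k) auto
      show ?thesis unfolding P_def p using N0 by (simp add: power_divide field_simps)
    qed
    then show ?thesis using S1[OF k2 kl ln] unfolding w_def m_def N_def K_def by simp
  qed
  have S2': "(\<Sum>j=l..n-1. Tj j) \<le> 1/m + 1/K"
    using S2[OF k2 kl ln] unfolding Tj_def m_def K_def by simp
  have T0: "0 \<le> (\<Sum>j=l..n-1. Tj j)" unfolding Tj_def using kl by (intro sum_nonneg) auto
  have P0: "0 \<le> P" unfolding P_def using m0 N0 by simp
  have fin: "R*m/((K-1)*real n) - 1/(K-1)*P*Sr K r (ln (real n / real l)) - 3*K^2*R/((K-1)*real n)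
     \<le> R/real n*(\<Sum>j=l..n. w j) - (R-1)/real n - (R-1)*((3*K^2+K)/real n + K/N)*(\<Sum>j=l..n-1. Tj j)
        - P*(Sr K r (ln (real n / real l))-R)/(K-1)"
    by (rule Fin[OF K2 _ _ mK NK _ T0 S2' P0 S1']) (use r1 rk R_def K_def N_def in auto)
  have Fe: "F k n r l = R*m/((K-1)*real n) - 1/(K-1)*P*Sr K r (ln (real n / real l)) - 3*K^2*R/((K-1)*real n)"
    unfolding F_def R_def m_def K_def P_def N_def by simp
  have "F k n r l \<le> f n + (\<Sum>j=l..n-1. f j)"
  proof -
    have "R/real n*(\<Sum>j=l..n. w j) = R/real n * P + R/real n*(\<Sum>j=l..n-1. w j)"
      unfolding splitw wn by (simp add: distrib_left)
    moreover have "C * (\<Sum>j=l..n-1. Tj j) = (R-1)*((3*K^2+K)/real n + K/N)*(\<Sum>j=l..n-1. Tj j)"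
      unfolding C_def by (simp add: algebra_simps)
    moreover have "R/real n * P - (R-1)/real n = P/real n + (R-1)/real n*(P - 1)"
      by (simp add: algebra_simps diff_divide_distrib add_divide_distrib)
    moreover have "(R-1)/real n*(P - 1) \<le> 0"
    proof -
      have "P \<le> 1" unfolding P_def using m0 mK ln m_def N_def by (intro power_le_one) auto
      then show ?thesis using r1 R_def by (intro mult_nonneg_nonpos) auto
    qed
    moreover have "P * (\<Sum>j=l..n-1. g j - g (Suc j))/(K-1) = P*(Sr K r (ln (real n / real l))-R)/(K-1)"
      by (simp only: tele)
    ultimately show ?thesis
      using Fe fin sumterm sumeq fn by linarith
  qed
  then show ?thesis using split unfolding f_def by simp
qed


theorem mainTheorem9:
  fixes k n :: nat and c :: real and b :: "nat \<Rightarrow> nat \<Rightarrow> real"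
  assumes hk: "k \<ge> 2"
    and hc: "c \<ge> 0"
    and hlast: "\<And>r. r \<le> k \<Longrightarrow> b (n + 1) r = 0"
    and hzero: "\<And>l. k < l \<Longrightarrow> l \<le> n + 1 \<Longrightarrow> b l 0 = 0"
    and hrec: "\<And>l r. k < l \<Longrightarrow> l \<le> n \<Longrightarrow> 1 \<le> r \<Longrightarrow> r \<le> k \<Longrightarrow>
       b l r = (\<Sum>j = l..n. ((real l - real k) / (real j - real k)) ^ k *
                 ((real k - 1) / (real j + 1) * b (j + 1) (r - 1) + c / real n))"
  shows "\<forall>l r. k ^ 2 + k \<le> l \<longrightarrow> l \<le> n \<longrightarrow> r \<le> k \<longrightarrow>
     b l r \<ge> (real r * (real l - real k) / ((real k - 1) * real n)
        - 1 / (real k - 1) * ((real l - real k) / (real n - real k)) ^ k *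
          (\<Sum>r'<r. \<Sum>i = 0..r'. (real k - 1) ^ i / fact i * (ln (real n / real l)) ^ i)
        - 3 * (real k)\<^sup>2 * real r / ((real k - 1) * real n)) * c"
proof -
  have Fc: "F k n r l * c \<le> b l r" if "r \<le> k" "k ^ 2 + k \<le> l" "l \<le> n" for r l
    using that
  proof (induction r arbitrary: l)
    case 0
    have "0 < k^2" using hk by simp
    then have "k < l" using 0 by linarith
    then have "b l 0 = 0" using 0 by (intro hzero) auto
    moreover have "F k n 0 l = 0" unfolding F_def Sr_def by simp
    ultimately show ?case by simp
  next
    case (Suc r)
    have "0 < k^2" using hk by simp
    then have kl: "k < l" using Suc.prems by linarith
    have rec: "b l (Suc r) = (\<Sum>j = l..n. ((real l - real k) / (real j - real k)) ^ k *
                 ((real k - 1) / (real j + 1) * b (j + 1) r + c / real n))"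
      using hrec[OF kl Suc.prems(3) _ Suc.prems(1)] by simp
    have st: "F k n (Suc r) l \<le> (\<Sum>j=l..n. ((real l - real k)/(real j - real k))^k *
            ((real k - 1)/(real j + 1) * (if j < n then F k n r (j+1) else 0) + 1/real n))"
    proof -
      have o: "1 \<le> Suc r" by simp
      show ?thesis using Step[OF hk Suc.prems(2) Suc.prems(3) o Suc.prems(1)] by (simp only: diff_Suc_1)
    qed
    have "F k n (Suc r) l * c \<le> (\<Sum>j=l..n. ((real l - real k)/(real j - real k))^k *
            ((real k - 1)/(real j + 1) * (if j < n then F k n r (j+1) else 0) + 1/real n)) * c"
      using st hc by (intro mult_right_mono) auto
    also have "\<dots> = (\<Sum>j=l..n. ((real l - real k)/(real j - real k))^k *
            ((real k - 1)/(real j + 1) * ((if j < n then F k n r (j+1) else 0) * c) + c/real n))"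
      by (subst sum_distrib_right) (intro sum.cong refl, simp add: algebra_simps)
    also have "\<dots> \<le> (\<Sum>j = l..n. ((real l - real k) / (real j - real k)) ^ k *
                 ((real k - 1) / (real j + 1) * b (j + 1) r + c / real n))"
    proof (intro sum_mono mult_left_mono add_right_mono)
      fix j assume j: "j \<in> {l..n}"
      show "(if j < n then F k n r (j+1) else 0) * c \<le> b (j + 1) r"
      proof (cases "j < n")
        case True
        then show ?thesis using Suc.IH[of "j+1"] Suc.prems j by auto
      next
        case False
        then have "j = n" using j by auto
        then show ?thesis using hlast[of r] Suc.prems by simp
      qed
      show "0 \<le> (real k - 1) / (real j + 1)" using hk by simp
      show "0 \<le> ((real l - real k) / (real j - real k)) ^ k" using j kl by simp
    qed
    also have "\<dots> = b l (Suc r)" using rec by simp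
    finally show ?case .
  qed
  show ?thesis
  proof (intro allI impI)
    fix l r assume "k ^ 2 + k \<le> l" "l \<le> n" "r \<le> k"
    then have "F k n r l * c \<le> b l r" using Fc by blast
    then show "b l r \<ge> (real r * (real l - real k) / ((real k - 1) * real n)
        - 1 / (real k - 1) * ((real l - real k) / (real n - real k)) ^ k *
          (\<Sum>r'<r. \<Sum>i = 0..r'. (real k - 1) ^ i / fact i * (ln (real n / real l)) ^ i)
        - 3 * (real k)\<^sup>2 * real r / ((real k - 1) * real n)) * c"
      unfolding F_def Sr_eq by simp
  qed
qed

end
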